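(* Let $\beta$ be an element of $\mathbb{K}$ (e.g. an indeterminate adjoined to $\mathbb{K}$). Let $G_{\mathrm{cyc}}$ be the $q$-grammar with master variables $S=\{x,y,z,e\}$, rule \[ x_j\mapsto q^jy_jx_{j+1},\quad y_j\mapsto q^jy_jx_{j+1},\quad z_j\mapsto q^jy_jx_{j+1},\quad e_j\mapsto \beta q^je_jz_{j+1}\qquad(j\ge0), \] and order KSO (identity), and let $D$ be its $q$-derivative. Let $\phi$ be the evaluation with $\phi(x_j)=x$, $\phi(y_j)=y$, $\phi(z_j)=z$, $\phi(e_j)=e$ for all $j$ (commuting indeterminates). Then for all $n\ge1$, \[ \phi\big(D^n(e_0)\big)=e\,F^{\mathrm{inv}}_n(q;x,y,z\mid\beta),\qquad F^{\mathrm{inv}}_n(q;x,y,z\mid\beta)=\sum_{\sigma\in\mathfrak{S}_n}q^{\operatorname{inv}(\sigma)}x^{\operatorname{iasc}(\sigma)}z^{\operatorname{isol}(\sigma)}y^{\operatorname{des}(\sigma)-1}\beta^{\operatorname{RLmin}(\sigma)}. \]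
   Context: $\mathbb{K}$ is a commutative ring with unity and characteristic zero, $q$ an indeterminate. For a set $S$ of master variables, $\mathbb{S}=\{s_i:s\in S,\ i\ge0\}$ is a set of non-commuting variables, $F(\mathbb{S})$ the free group on $\mathbb{S}$, $\mathbb{E}=\mathbb{K}[q][F(\mathbb{S})]$ its group algebra. A rule $R$ assigns to each $s_i$ an element of $\mathbb{E}$, extended by $R(s_i^{-1})=-s_i^{-1}R(s_i)s_{i+1}^{-1}$. The up-arrow $\uparrow$ is the linear map replacing each letter $s_i^{\pm1}$ by $s_{i+1}^{\pm1}$. The $q$-derivative of a $q$-grammar $(S,R,\rho)$ (with $\rho$ an order, i.e. a letter-permuting rewriting of words; KSO is the identity) is the $\mathbb{K}[q]$-linear map with $D(w_1\cdots w_n)=\sum_{j=1}^n\rho\big(w_1\cdots w_{j-1}R(w_j)\uparrow(w_{j+1}\cdots w_n)\big)$ for letters $w_j$, $D^0=\mathrm{id}$, $D^k=D\circ D^{k-1}$. An evaluation extends to a $\mathbb{K}[q]$-linear ring morphism. For $\sigma\in\mathfrak{S}_n$ with convention $\sigma_0=\sigma_{n+1}=0$: $0\le i\le n$ is a descent if $\sigma_i>\sigma_{i+1}$, an ascent otherwise, $\operatorname{des}$ counts descents; $\operatorname{inv}(\sigma)=\#\{(i,j):i<j,\ \sigma_i>\sigma_j\}$; a right-to-left minimum is an entry $\sigma_i$ with $\sigma_i<\sigma_j$ for all $j>i$, $\operatorname{RLmin}$ counts them; placing a bar at the start and after each right-to-left minimum, an entry alone between two consecutive bars is isolated, $\operatorname{isol}$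 counts isolated entries; an index $0\le i\le n-1$ is a non-isolated ascent if it is an ascent and $\sigma_{i+1}$ is not isolated, $\operatorname{iasc}$ counts them. *)

theory Defs
  imports "HOL-Computational_Algebra.Polynomial" "HOL-Combinatorics.Multiset_Permutations"
begin

datatype mvar = X | Y | Z | E

type_synonym letter = "mvar \<times> nat"
type_synonym word = "letter list"

(* An element of K[q][words] is a finitely supported coefficient function
   word => K[q]; the q-polynomials are 'a poly. *)
type_synonym 'a elt = "word \<Rightarrow> 'a poly"

definition supp :: "'a::zero elt \<Rightarrow> word set" where
  "supp f = {w. f w \<noteq> 0}"

definition single :: "word \<Rightarrow> 'a::zero poly \<Rightarrow> 'a elt" where
  "single w c = (\<lambda>w'. if w' = w then c else 0)"

definition up :: "word \<Rightarrow> word" where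
  "up w = map (\<lambda>(s, i). (s, Suc i)) w"

(* q-derivative of a q-grammar with rule R and order KSO (identity):
   D(w_1...w_n) = sum_j w_1...w_{j-1} R(w_j) up(w_{j+1}...w_n), extended linearly *)
definition qderiv :: "(letter \<Rightarrow> 'a::comm_ring_1 elt) \<Rightarrow> 'a elt \<Rightarrow> 'a elt" where
  "qderiv R f = (\<lambda>w'. \<Sum>w\<in>supp f. f w *
      (\<Sum>j<length w. \<Sum>u\<in>{u \<in> supp (R (w ! j)). take j w @ u @ up (drop (Suc j) w) = w'}.
          R (w ! j) u))"

fun rule_cyc :: "'a::comm_ring_1 \<Rightarrow> letter \<Rightarrow> 'a elt" where
  "rule_cyc \<beta> (X, j) = single [(Y, j), (X, Suc j)] (monom 1 j)"
| "rule_cyc \<beta> (Y, j) = single [(Y, j), (X, Suc j)] (monom 1 j)"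
| "rule_cyc \<beta> (Z, j) = single [(Y, j), (X, Suc j)] (monom 1 j)"
| "rule_cyc \<beta> (E, j) = single [(E, j), (Z, Suc j)] (monom \<beta> j)"

(* Elements of K[q][x,y,z,e] as coefficient functions:
   exponent tuple (a,b,c,d) of x^a y^b z^c e^d  ->  coefficient in K[q] *)
type_synonym 'a cpoly = "nat \<times> nat \<times> nat \<times> nat \<Rightarrow> 'a poly"

definition cnt :: "mvar \<Rightarrow> word \<Rightarrow> nat" where
  "cnt s w = length (filter (\<lambda>l. fst l = s) w)"

definition expo :: "word \<Rightarrow> nat \<times> nat \<times> nat \<times> nat" where
  "expo w = (cnt X w, cnt Y w, cnt Z w, cnt E w)"

definition phi :: "'a::comm_ring_1 elt \<Rightarrow> 'a cpoly" where
  "phi f = (\<lambda>m. \<Sum>w\<in>{w \<in> supp f. expo w = m}. f w)"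

(* sigma in S_n as the list [sigma_1,...,sigma_n], with sigma_0 = sigma_{n+1} = 0 *)
definition sg :: "nat list \<Rightarrow> nat \<Rightarrow> nat" where
  "sg xs i = (if 1 \<le> i \<and> i \<le> length xs then xs ! (i - 1) else 0)"

definition des :: "nat list \<Rightarrow> nat" where
  "des xs = card {i. i \<le> length xs \<and> sg xs i > sg xs (Suc i)}"

definition inv_stat :: "nat list \<Rightarrow> nat" where
  "inv_stat xs = card {(i, j). 1 \<le> i \<and> i < j \<and> j \<le> length xs \<and> sg xs i > sg xs j}"

definition is_rlmin :: "nat list \<Rightarrow> nat \<Rightarrow> bool" where
  "is_rlmin xs i \<longleftrightarrow> 1 \<le> i \<and> i \<le> length xs \<and> (\<forall>j. i < j \<and> j \<le> length xs \<longrightarrow> sg xs i < sg xs j)"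

definition RLmin :: "nat list \<Rightarrow> nat" where
  "RLmin xs = card {i. is_rlmin xs i}"

(* bars at the start and after each RL-minimum; sigma_i isolated iff there is a bar
   immediately before and immediately after position i *)
definition is_isol :: "nat list \<Rightarrow> nat \<Rightarrow> bool" where
  "is_isol xs i \<longleftrightarrow> 1 \<le> i \<and> i \<le> length xs \<and> (i = 1 \<or> is_rlmin xs (i - 1)) \<and> is_rlmin xs i"

definition isol :: "nat list \<Rightarrow> nat" where
  "isol xs = card {i. is_isol xs i}"

definition iasc :: "nat list \<Rightarrow> nat" where
  "iasc xs = card {i. i < length xs \<and> \<not> (sg xs i > sg xs (Suc i)) \<and> \<not> is_isol xs (Suc i)}"

definition eFinv :: "'a::comm_ring_1 \<Rightarrow> nat \<Rightarrow> 'a cpoly" where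
  "eFinv \<beta> n = (\<lambda>(a, b, c, d).
     if d = 1 then
       (\<Sum>\<sigma>\<in>{\<sigma> \<in> permutations_of_set {1..n}.
              iasc \<sigma> = a \<and> des \<sigma> - 1 = b \<and> isol \<sigma> = c}. monom (\<beta> ^ RLmin \<sigma>) (inv_stat \<sigma>))
     else 0)"

end

theory Submission
  imports Defs
begin


definition insm :: "nat list \<Rightarrow> nat \<Rightarrow> nat \<Rightarrow> nat list" where
  "insm xs i m = take i xs @ m # drop i xs"

lemma length_insm: "i \<le> length xs \<Longrightarrow> length (insm xs i m) = Suc (length xs)"
  by (simp add: insm_def)

lemma sg_insm:
  assumes "i \<le> length xs"
  shows "sg (insm xs i m) k = (if k \<le> i then sg xs k else if k = Suc i then m else sg xs (k - 1))"
proof -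
  have L: "length (take i xs) = i" using assms by simp
  show ?thesis
  proof (cases "k \<le> i")
    case True
    then show ?thesis using assms L by (auto simp: sg_def insm_def nth_append)
  next
    case False
    show ?thesis
    proof (cases "k = Suc i")
      case True then show ?thesis using assms L by (auto simp: sg_def insm_def nth_append)
    next
      case F2: False
      then have "k - 1 - i = Suc (k - 1 - 1 - i)" using False by simp
      then show ?thesis using assms L False F2 by (auto simp: sg_def insm_def nth_append numeral_2_eq_2)
    qed
  qed
qed

lemma sg_in_set: "1 \<le> k \<Longrightarrow> k \<le> length xs \<Longrightarrow> sg xs k \<in> set xs"
  by (simp add: sg_def)

lemma sg_out: "\<not> (1 \<le> k \<and> k \<le> length xs) \<Longrightarrow> sg xs k = 0"
  by (auto simp add: sg_def)



lemma rlmin_insm: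
  assumes i: "i \<le> length xs" and m: "\<forall>a\<in>set xs. a < m" and m0: "0 < m"
  shows "is_rlmin (insm xs i m) k =
    (if k \<le> i then is_rlmin xs k else if k = Suc i then i = length xs else is_rlmin xs (k - 1))"
proof -
  let ?t = "insm xs i m"
  let ?n = "length xs"
  have lt: "length ?t = Suc ?n" using i by (simp add: length_insm)
  have sgm: "\<And>k. sg xs k < m"
  proof -
    fix k show "sg xs k < m"
      using m sg_in_set[of k xs] sg_out[of k xs] m0
      by (cases "1 \<le> k \<and> k \<le> length xs") auto
  qed
  note S = sg_insm[OF i, of m]
  show ?thesis
  proof (cases "k \<le> i")
    case True
    have "is_rlmin ?t k = is_rlmin xs k"
    proof
      assume H: "is_rlmin ?t k"
      show "is_rlmin xs k" unfolding is_rlmin_def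
      proof (intro conjI allI impI)
        show "1 \<le> k" using H by (simp add: is_rlmin_def)
        show "k \<le> ?n" using H True i by (simp add: is_rlmin_def)
        fix j assume j: "k < j \<and> j \<le> ?n"
        show "sg xs k < sg xs j"
        proof (cases "j \<le> i")
          case True
          then show ?thesis using H j \<open>k \<le> i\<close> S[of k] S[of j] lt by (auto simp: is_rlmin_def)
        next
          case False
          have "sg ?t k < sg ?t (Suc j)" using H j lt by (auto simp: is_rlmin_def)
          then show ?thesis using False \<open>k \<le> i\<close> S[of k] S[of "Suc j"] by auto
        qed
      qed
    next
      assume H: "is_rlmin xs k"
      show "is_rlmin ?t k" unfolding is_rlmin_def
      proof (intro conjI allI impI)
        show "1 \<le> k" using H by (simp add: is_rlmin_def)
        show "k \<le> length ?t" using H lt by (simp add: is_rlmin_def)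
        fix j assume j: "k < j \<and> j \<le> length ?t"
        show "sg ?t k < sg ?t j"
        proof -
          have "j \<le> i \<or> j = Suc i \<or> j > Suc i" by auto
          moreover have "j \<le> i \<Longrightarrow> ?thesis" using H j \<open>k \<le> i\<close> S[of k] S[of j] i
            by (auto simp: is_rlmin_def)
          moreover have "j = Suc i \<Longrightarrow> ?thesis" using \<open>k \<le> i\<close> S[of k] S[of j] sgm by auto
          moreover have "j > Suc i \<Longrightarrow> ?thesis"
          proof -
            assume ji: "j > Suc i"
            have "k < j - 1 \<and> j - 1 \<le> ?n" using j ji \<open>k \<le> i\<close> lt by linarith
            then have "sg xs k < sg xs (j - 1)" using H by (simp add: is_rlmin_def)
            then show ?thesis using ji \<open>k \<le> i\<close> S[of k] S[of j] by simp
          qed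
          ultimately show ?thesis by blast
        qed
      qed
    qed
    then show ?thesis using True by simp
  next
    case False
    show ?thesis
    proof (cases "k = Suc i")
      case True
      have "is_rlmin ?t k = (i = ?n)"
      proof
        assume H: "is_rlmin ?t k"
        show "i = ?n"
        proof (rule ccontr)
          assume "i \<noteq> ?n"
          then have "Suc (Suc i) \<le> length ?t" using i lt by simp
          then have "sg ?t k < sg ?t (Suc (Suc i))" using H True by (auto simp: is_rlmin_def)
          then show False using S[of k] S[of "Suc (Suc i)"] True sgm[of "Suc i"] by auto
        qed
      next
        assume "i = ?n"
        then show "is_rlmin ?t k" using True lt by (auto simp: is_rlmin_def)
      qed
      then show ?thesis using True False by simp
    next
      case F2: False
      then have ki: "k > Suc i" using False by simp
      have "is_rlmin ?t k = is_rlmin xs (k - 1)"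
      proof
        assume H: "is_rlmin ?t k"
        show "is_rlmin xs (k - 1)" unfolding is_rlmin_def
        proof (intro conjI allI impI)
          show "1 \<le> k - 1" using ki by simp
          show "k - 1 \<le> ?n" using H lt by (auto simp: is_rlmin_def)
          fix j assume j: "k - 1 < j \<and> j \<le> ?n"
          have "sg ?t k < sg ?t (Suc j)" using H j lt by (auto simp: is_rlmin_def)
          moreover have "\<not> Suc j \<le> i" "Suc j \<noteq> Suc i" using ki j by linarith+
          ultimately show "sg xs (k - 1) < sg xs j" using S[of k] S[of "Suc j"] ki j by auto
        qed
      next
        assume H: "is_rlmin xs (k - 1)"
        show "is_rlmin ?t k" unfolding is_rlmin_def
        proof (intro conjI allI impI)
          show "1 \<le> k" using ki by simp
          show "k \<le> length ?t" using H lt ki by (auto simp: is_rlmin_def)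
          fix j assume j: "k < j \<and> j \<le> length ?t"
          have "k - 1 < j - 1 \<and> j - 1 \<le> ?n" using j lt ki by linarith
          then have "sg xs (k - 1) < sg xs (j - 1)" using H by (simp add: is_rlmin_def)
          then show "sg ?t k < sg ?t j" using S[of k] S[of j] ki j by auto
        qed
      qed
      then show ?thesis using False F2 by simp
    qed
  qed
qed



definition fsh :: "nat \<Rightarrow> nat \<Rightarrow> nat" where
  "fsh i k = (if k \<le> i then k else Suc k)"

lemma sg_fsh: "i \<le> length xs \<Longrightarrow> sg (insm xs i m) (fsh i k) = sg xs k"
  by (simp add: sg_insm fsh_def)

lemma fsh_inj: "inj (fsh i)"
  by (auto simp: inj_def fsh_def split: if_splits)

lemma fsh_less: "(fsh i a < fsh i b) = (a < b)"
  by (auto simp: fsh_def)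

lemma fsh_surj: "k \<noteq> Suc i \<Longrightarrow> \<exists>k'. k = fsh i k'"
  by (rule exI[of _ "if k \<le> i then k else k - 1"]) (auto simp: fsh_def)

lemma fsh_ne: "fsh i k \<noteq> Suc i"
  by (auto simp: fsh_def)

lemma fsh_ne2: "Suc i \<noteq> fsh i k"
  by (auto simp: fsh_def)

lemma sgm_lt:
  assumes m: "\<forall>a\<in>set xs. a < m" and m0: "0 < m"
  shows "sg xs k < m"
  using m sg_in_set[of k xs] sg_out[of k xs] m0
  by (cases "1 \<le> k \<and> k \<le> length xs") auto

lemma inv_insm:
  assumes i: "i \<le> length xs" and m: "\<forall>a\<in>set xs. a < m" and m0: "0 < m"
  shows "inv_stat (insm xs i m) = inv_stat xs + (length xs - i)"
proof -
  let ?t = "insm xs i m"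
  let ?n = "length xs"
  have lt: "length ?t = Suc ?n" using i by (simp add: length_insm)
  define IT where "IT = {(a, b). 1 \<le> a \<and> a < b \<and> b \<le> length ?t \<and> sg ?t a > sg ?t b}"
  define IX where "IX = {(a, b). 1 \<le> a \<and> a < b \<and> b \<le> ?n \<and> sg xs a > sg xs b}"
  let ?g = "\<lambda>(a, b). (fsh i a, fsh i b)"
  have S: "\<And>k. sg ?t k = (if k \<le> i then sg xs k else if k = Suc i then m else sg xs (k - 1))"
    using sg_insm[OF i] by blast
  have b1: "\<And>a. (1 \<le> fsh i a) = (1 \<le> a)" by (auto simp: fsh_def)
  have b2: "\<And>b. (fsh i b \<le> Suc ?n) = (b \<le> ?n)" using i by (auto simp: fsh_def)
  have eq: "IT = ?g ` IX \<union> Pair (Suc i) ` {Suc i<..Suc ?n}"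
  proof (rule set_eqI)
    fix p :: "nat \<times> nat"
    obtain a b where p: "p = (a, b)" by (cases p)
    show "p \<in> IT \<longleftrightarrow> p \<in> ?g ` IX \<union> Pair (Suc i) ` {Suc i<..Suc ?n}"
    proof
      assume "p \<in> IT"
      then have H: "1 \<le> a" "a < b" "b \<le> Suc ?n" "sg ?t a > sg ?t b" using lt p by (auto simp: IT_def)
      show "p \<in> ?g ` IX \<union> Pair (Suc i) ` {Suc i<..Suc ?n}"
      proof (cases "a = Suc i")
        case True then show ?thesis using H p by auto
      next
        case False
        have "b \<noteq> Suc i"
        proof
          assume "b = Suc i"
          then have "a \<le> i" using H by simp
          then show False using H S[of a] S[of b] \<open>b = Suc i\<close> sgm_lt[OF m m0, of a] by simp
        qed
        obtain a' b' where a': "a = fsh i a'" and b': "b = fsh i b'"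
          using fsh_surj False \<open>b \<noteq> Suc i\<close> by metis
        have "(a', b') \<in> IX" using H a' b' b1 b2 fsh_less sg_fsh[OF i] unfolding IX_def by auto
        then show ?thesis using p a' b' by auto
      qed
    next
      assume "p \<in> ?g ` IX \<union> Pair (Suc i) ` {Suc i<..Suc ?n}"
      then show "p \<in> IT"
      proof
        assume "p \<in> ?g ` IX"
        then obtain a' b' where "(a', b') \<in> IX" "p = (fsh i a', fsh i b')" by auto
        then show ?thesis using b1 b2 fsh_less sg_fsh[OF i] lt unfolding IX_def IT_def by auto
      next
        assume "p \<in> Pair (Suc i) ` {Suc i<..Suc ?n}"
        then obtain b where b: "p = (Suc i, b)" "Suc i < b" "b \<le> Suc ?n" by auto
        have "sg ?t b = sg xs (b - 1)" using S[of b] b by simp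
        then have "sg ?t b < m" using sgm_lt[OF m m0] by simp
        then show ?thesis using b S[of "Suc i"] lt unfolding IT_def by auto
      qed
    qed
  qed
  have fin: "finite IX"
    by (rule finite_subset[of _ "{0..?n} \<times> {0..?n}"]) (auto simp: IX_def)
  have injg: "inj ?g" using fsh_inj by (auto simp: inj_def)
  have disj: "?g ` IX \<inter> Pair (Suc i) ` {Suc i<..Suc ?n} = {}" using fsh_ne by auto
  have "card IT = card (?g ` IX) + card (Pair (Suc i) ` {Suc i<..Suc ?n})"
    unfolding eq by (rule card_Un_disjoint) (use fin disj in auto)
  also have "card (?g ` IX) = card IX" using injg by (simp add: card_image inj_on_subset)
  also have "card (Pair (Suc i) ` {Suc i<..Suc ?n}) = ?n - i" by (subst card_image) (auto simp: inj_on_def)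
  finally show ?thesis unfolding inv_stat_def IT_def IX_def by simp
qed

lemma RLmin_insm:
  assumes i: "i \<le> length xs" and m: "\<forall>a\<in>set xs. a < m" and m0: "0 < m"
  shows "RLmin (insm xs i m) = RLmin xs + (if i = length xs then 1 else 0)"
proof -
  let ?t = "insm xs i m"
  have R: "\<And>k. is_rlmin ?t k =
    (if k \<le> i then is_rlmin xs k else if k = Suc i then i = length xs else is_rlmin xs (k - 1))"
    using rlmin_insm[OF i m m0] by blast
  have Rf: "\<And>k. is_rlmin ?t (fsh i k) = is_rlmin xs k" using R fsh_ne by (auto simp: fsh_def)
  have eq: "{k. is_rlmin ?t k} = fsh i ` {k. is_rlmin xs k} \<union> {k. k = Suc i \<and> i = length xs}"
  proof (rule set_eqI)
    fix k show "k \<in> {k. is_rlmin ?t k} \<longleftrightarrow> k \<in> fsh i ` {k. is_rlmin xs k} \<union> {k. k = Suc i \<and> i = length xs}"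
    proof (cases "k = Suc i")
      case True then show ?thesis using R[of k] by (auto simp: fsh_ne fsh_ne2)
    next
      case False
      then obtain k' where "k = fsh i k'" using fsh_surj by blast
      then show ?thesis using Rf fsh_inj False by (auto simp: inj_def)
    qed
  qed
  have fin: "finite {k. is_rlmin xs k}"
    by (rule finite_subset[of _ "{0..length xs}"]) (auto simp: is_rlmin_def)
  have disj: "fsh i ` {k. is_rlmin xs k} \<inter> {k. k = Suc i \<and> i = length xs} = {}" using fsh_ne by auto
  have "card {k. is_rlmin ?t k} = card (fsh i ` {k. is_rlmin xs k}) + card {k. k = Suc i \<and> i = length xs}"
    unfolding eq by (rule card_Un_disjoint) (use fin disj in auto)
  also have "card (fsh i ` {k. is_rlmin xs k}) = card {k. is_rlmin xs k}"
    by (meson card_image fsh_inj inj_on_subset subset_UNIV)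
  also have "card {k. k = Suc i \<and> i = length xs} = (if i = length xs then 1 else 0)" by auto
  finally show ?thesis unfolding RLmin_def .
qed



definition lab :: "nat list \<Rightarrow> nat \<Rightarrow> mvar" where
  "lab xs k = (if k = length xs then E else if sg xs k > sg xs (Suc k) then Y
     else if is_rlmin xs (Suc k) then Z else X)"

definition wd :: "nat list \<Rightarrow> word" where
  "wd xs = map (\<lambda>p. (lab xs (length xs - p), p)) [0..<Suc (length xs)]"

definition rwd :: "letter \<Rightarrow> word" where
  "rwd l = (if fst l = E then [(E, snd l), (Z, Suc (snd l))] else [(Y, snd l), (X, Suc (snd l))])"

definition insw :: "word \<Rightarrow> nat \<Rightarrow> word" where
  "insw w j = take j w @ rwd (w ! j) @ up (drop (Suc j) w)"

lemma length_wd: "length (wd xs) = Suc (length xs)"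
  by (simp add: wd_def)

lemma nth_wd: "p \<le> length xs \<Longrightarrow> wd xs ! p = (lab xs (length xs - p), p)"
  unfolding wd_def by (subst nth_map) (auto simp del: upt_Suc)

lemma lab_E: "k \<le> length xs \<Longrightarrow> (lab xs k = E) = (k = length xs)"
  by (simp add: lab_def)

lemma lab_insm:
  assumes i: "i \<le> length xs" and m: "\<forall>a\<in>set xs. a < m" and m0: "0 < m"
  shows "lab (insm xs i m) k = (if k < i then lab xs k else if k = i then (if i = length xs then Z else X)
     else if k = Suc i then (if i = length xs then E else Y) else lab xs (k - 1))"
proof -
  let ?t = "insm xs i m"
  let ?n = "length xs"
  have lt: "length ?t = Suc ?n" using i by (simp add: length_insm)
  have S: "\<And>k. sg ?t k = (if k \<le> i then sg xs k else if k = Suc i then m else sg xs (k - 1))"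
    using sg_insm[OF i] by blast
  have R: "\<And>k. is_rlmin ?t k =
    (if k \<le> i then is_rlmin xs k else if k = Suc i then i = length xs else is_rlmin xs (k - 1))"
    using rlmin_insm[OF i m m0] by blast
  have sl: "\<And>k. sg xs k < m" using sgm_lt[OF m m0] .
  consider "k < i" | "k = i" | "k = Suc i" | "k > Suc i" by linarith
  then show ?thesis
  proof cases
    case 1 then show ?thesis using i lt S[of k] S[of "Suc k"] R[of "Suc k"] by (simp add: lab_def)
  next
    case 2 then show ?thesis using i lt S[of k] S[of "Suc k"] R[of "Suc k"] sl[of k] by (simp add: lab_def)
  next
    case 3 then show ?thesis using i lt S[of k] S[of "Suc k"] R[of "Suc k"] sl[of "Suc i"] by (simp add: lab_def)
  next
    case 4
    then have "(k = Suc ?n) = (k - 1 = ?n)" by auto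
    then show ?thesis using 4 i lt S[of k] S[of "Suc k"] R[of "Suc k"] by (simp add: lab_def)
  qed
qed



lemma length_rwd[simp]: "length (rwd l) = 2"
  by (simp add: rwd_def)

lemma wd_insm:
  assumes j: "j \<le> length xs" and m: "\<forall>a\<in>set xs. a < m" and m0: "0 < m"
  shows "wd (insm xs (length xs - j) m) = insw (wd xs) j"
proof -
  let ?n = "length xs"
  let ?i = "?n - j"
  let ?t = "insm xs ?i m"
  have i: "?i \<le> ?n" by simp
  have lt: "length ?t = Suc ?n" using i by (simp add: length_insm)
  have L: "\<And>k. lab ?t k = (if k < ?i then lab xs k else if k = ?i then (if ?i = ?n then Z else X)
     else if k = Suc ?i then (if ?i = ?n then E else Y) else lab xs (k - 1))"
    using lab_insm[OF i m m0] by blast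
  have lw: "length (wd xs) = Suc ?n" by (simp add: length_wd)
  have len: "length (insw (wd xs) j) = Suc (Suc ?n)"
    using j lw by (simp add: insw_def rwd_def up_def)
  show ?thesis
  proof (rule nth_equalityI)
    show "length (wd ?t) = length (insw (wd xs) j)" using len lt by (simp add: length_wd)
    fix p assume "p < length (wd ?t)"
    then have p: "p \<le> Suc ?n" using lt by (simp add: length_wd)
    have lhs: "wd ?t ! p = (lab ?t (Suc ?n - p), p)" using nth_wd[of p ?t] p lt by simp
    have wj: "wd xs ! j = (lab xs ?i, j)" using nth_wd[OF j] .
    have ej: "(lab xs ?i = E) = (j = 0)" using lab_E[of ?i xs] j by auto
    consider "p < j" | "p = j" | "p = Suc j" | "p > Suc j" by linarith
    then show "wd ?t ! p = insw (wd xs) j ! p"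
    proof cases
      case 1
      then have "insw (wd xs) j ! p = wd xs ! p" using lw j by (simp add: insw_def nth_append)
      also have "\<dots> = (lab xs (?n - p), p)" using nth_wd[of p xs] 1 j by simp
      finally have r: "insw (wd xs) j ! p = (lab xs (?n - p), p)" .
      have a: "\<not> Suc ?n - p < ?i" "Suc ?n - p \<noteq> ?i" "Suc ?n - p \<noteq> Suc ?i" "Suc ?n - p - 1 = ?n - p"
        using 1 j by linarith+
      show ?thesis using lhs r L[of "Suc ?n - p"] a by simp
    next
      case 2
      then have r: "insw (wd xs) j ! p = rwd (wd xs ! j) ! 0" using lw j by (simp add: insw_def nth_append)
      have a: "Suc ?n - p = Suc ?i" "(?i = ?n) = (j = 0)" using 2 j by linarith+
      show ?thesis using lhs r L[of "Suc ?n - p"] a 2 wj ej by (simp add: rwd_def)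
    next
      case 3
      then have r: "insw (wd xs) j ! p = rwd (wd xs ! j) ! 1" using lw j by (simp add: insw_def nth_append)
      have a: "Suc ?n - p = ?i" "(?i = ?n) = (j = 0)" using 3 j by linarith+
      show ?thesis using lhs r L[of "Suc ?n - p"] a 3 wj ej by (simp add: rwd_def)
    next
      case 4
      have n2: "\<not> p - j < 2" "\<not> p < j" using 4 by linarith+
      have r1: "insw (wd xs) j ! p = up (drop (Suc j) (wd xs)) ! (p - Suc (Suc j))"
        using lw j 4 n2 by (simp add: insw_def nth_append)
      have r2: "up (drop (Suc j) (wd xs)) ! (p - Suc (Suc j)) = (\<lambda>(s, i). (s, Suc i)) (wd xs ! (p - 1))"
      proof -
        have "Suc (p - 2) = p - 1" using 4 by linarith
        then show ?thesis using lw j p 4 by (simp add: up_def)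
      qed
      have a: "Suc ?n - p < ?i" "?n - (p - 1) = Suc ?n - p" "p - 1 \<le> ?n" "Suc (p - 1) = p" using 4 j p by linarith+
      have r3: "wd xs ! (p - 1) = (lab xs (Suc ?n - p), p - 1)" using nth_wd[of "p - 1" xs] a by simp
      show ?thesis using lhs r1 r2 r3 L[of "Suc ?n - p"] a by simp
    qed
  qed
qed



abbreviation P :: "nat \<Rightarrow> nat list set" where
  "P n \<equiv> permutations_of_set {1..n}"

lemma P_len: "\<sigma> \<in> P n \<Longrightarrow> length \<sigma> = n"
  using length_finite_permutations_of_set by fastforce

lemma P_set: "\<sigma> \<in> P n \<Longrightarrow> set \<sigma> = {1..n}"
  by (simp add: permutations_of_set_def)

lemma P_dist: "\<sigma> \<in> P n \<Longrightarrow> distinct \<sigma>"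
  by (simp add: permutations_of_set_def)

lemma P_lt: "\<sigma> \<in> P n \<Longrightarrow> \<forall>a\<in>set \<sigma>. a < Suc n"
  using P_set by fastforce

lemma set_insm: "set (insm s i m) = insert m (set s)"
proof -
  have "set s = set (take i s) \<union> set (drop i s)" by (metis append_take_drop_id set_append)
  then show ?thesis by (auto simp: insm_def)
qed

lemma distinct_insm: "distinct s \<Longrightarrow> m \<notin> set s \<Longrightarrow> distinct (insm s i m)"
proof -
  assume a: "distinct s" "m \<notin> set s"
  have d: "distinct (take i s @ drop i s)" using a by simp
  then show ?thesis using a by (auto simp: insm_def simp del: append_take_drop_id dest: in_set_takeD in_set_dropD)
qed

lemma bij_ins: "bij_betw (\<lambda>(\<sigma>, j). insm \<sigma> (n - j) (Suc n)) (P n \<times> {..<Suc n}) (P (Suc n))"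
proof -
  let ?h = "\<lambda>(\<sigma>, j). insm \<sigma> (n - j) (Suc n)"
  have inj: "inj_on ?h (P n \<times> {..<Suc n})"
  proof (rule inj_onI)
    fix p1 p2 assume p1: "p1 \<in> P n \<times> {..<Suc n}" and p2: "p2 \<in> P n \<times> {..<Suc n}"
      and eq: "?h p1 = ?h p2"
    obtain s1 j1 where q1: "p1 = (s1, j1)" by (cases p1)
    obtain s2 j2 where q2: "p2 = (s2, j2)" by (cases p2)
    have l1: "length s1 = n" "length s2 = n" using p1 p2 q1 q2 P_len by auto
    have n1: "Suc n \<notin> set s1" "Suc n \<notin> set s2" using p1 p2 q1 q2 P_lt by fastforce+
    have nt: "Suc n \<notin> set (take (n - j1) s1)" "Suc n \<notin> set (drop (n - j1) s1)"
      using n1 by (meson in_set_takeD in_set_dropD)+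
    have E: "take (n - j1) s1 @ Suc n # drop (n - j1) s1 = take (n - j2) s2 @ Suc n # drop (n - j2) s2"
      using eq q1 q2 unfolding insm_def by simp
    have "take (n - j1) s1 = take (n - j2) s2 \<and> drop (n - j1) s1 = drop (n - j2) s2"
      using append_Cons_eq_iff[OF nt] E by blast
    then have TD: "take (n - j1) s1 = take (n - j2) s2" "drop (n - j1) s1 = drop (n - j2) s2" by auto
    have "s1 = take (n - j1) s1 @ drop (n - j1) s1" by simp
    also have "\<dots> = s2" using TD by simp
    finally have "s1 = s2" .
    have "length (take (n - j1) s1) = n - j1" "length (take (n - j2) s2) = n - j2" using l1 by auto
    then have "n - j1 = n - j2" using TD by simp
    then have "j1 = j2" using p1 p2 q1 q2 by auto
    then show "p1 = p2" using q1 q2 \<open>s1 = s2\<close> by auto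
  qed
  have img: "?h ` (P n \<times> {..<Suc n}) = P (Suc n)"
  proof
    show "?h ` (P n \<times> {..<Suc n}) \<subseteq> P (Suc n)"
    proof clarify
      fix s j assume s: "s \<in> P n" and j: "j < Suc n"
      have "set (insm s (n - j) (Suc n)) = insert (Suc n) (set s)" by (rule set_insm)
      moreover have "distinct (insm s (n - j) (Suc n))"
        using P_dist[OF s] P_lt[OF s] by (intro distinct_insm) auto
      ultimately show "insm s (n - j) (Suc n) \<in> P (Suc n)" using P_set[OF s]
        by (intro permutations_of_setI) auto
    qed
  next
    show "P (Suc n) \<subseteq> ?h ` (P n \<times> {..<Suc n})"
    proof
      fix t assume t: "t \<in> P (Suc n)"
      then have "Suc n \<in> set t" using P_set by fastforce
      then obtain as bs where ab: "t = as @ Suc n # bs" by (meson split_list)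
      have dt: "distinct t" using P_dist[OF t] .
      let ?s = "as @ bs"
      have "set ?s = {1..n}"
      proof -
        have nn: "Suc n \<notin> set as" "Suc n \<notin> set bs" using dt ab by auto
        have "set ?s = set t - {Suc n}" using ab nn by auto
        also have "\<dots> = {1..n}" using P_set[OF t] by auto
        finally show ?thesis .
      qed
      moreover have "distinct ?s" using dt ab by auto
      ultimately have s: "?s \<in> P n" by auto
      have la: "length as \<le> n" using P_len[OF s] by simp
      have "t = insm ?s (n - (n - length as)) (Suc n)" using ab la by (simp add: insm_def)
      moreover have "(?s, n - length as) \<in> P n \<times> {..<Suc n}" using s by auto
      ultimately show "t \<in> ?h ` (P n \<times> {..<Suc n})" by force
    qed
  qed
  show ?thesis using inj img by (simp add: bij_betw_def)
qed



definition rcf :: "'a::comm_ring_1 \<Rightarrow> letter \<Rightarrow> 'a poly" where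
  "rcf \<beta> l = monom (if fst l = E then \<beta> else 1) (snd l)"

lemma rule_cyc_eq: "rule_cyc \<beta> l = single (rwd l) (rcf \<beta> l)"
proof -
  obtain s j where l: "l = (s, j)" by (cases l)
  show ?thesis unfolding l by (cases s) (simp_all add: rwd_def rcf_def)
qed

lemma supp_single: "supp (single v c) = (if c = 0 then {} else {v})"
  by (auto simp: supp_def single_def)

lemma sum_single: "(\<Sum>u\<in>{u \<in> supp (single v c). Q u}. single v c u) = (if Q v then c else 0)"
proof -
  have "{u \<in> supp (single v c). Q u} = (if c \<noteq> 0 \<and> Q v then {v} else {})"
    by (auto simp: supp_single)
  then show ?thesis by (auto simp: single_def)
qed

lemma qderiv_cyc:
  assumes "finite A" "supp f \<subseteq> A"
  shows "qderiv (rule_cyc \<beta>) f w' =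
    (\<Sum>w\<in>A. f w * (\<Sum>j<length w. if insw w j = w' then rcf \<beta> (w ! j) else 0))"
proof -
  have "qderiv (rule_cyc \<beta>) f w' =
    (\<Sum>w\<in>supp f. f w * (\<Sum>j<length w. if insw w j = w' then rcf \<beta> (w ! j) else 0))"
    unfolding qderiv_def rule_cyc_eq sum_single insw_def by simp
  also have "\<dots> = (\<Sum>w\<in>A. f w * (\<Sum>j<length w. if insw w j = w' then rcf \<beta> (w ! j) else 0))"
    using assms by (intro sum.mono_neutral_left) (auto simp: supp_def)
  finally show ?thesis .
qed

definition Psi :: "'a::comm_ring_1 \<Rightarrow> nat \<Rightarrow> 'a elt" where
  "Psi \<beta> n = (\<lambda>w. \<Sum>\<sigma>\<in>{\<sigma> \<in> P n. wd \<sigma> = w}. monom (\<beta> ^ RLmin \<sigma>) (inv_stat \<sigma>))"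

lemma supp_Psi: "supp (Psi \<beta> n) \<subseteq> wd ` P n"
proof
  fix w assume "w \<in> supp (Psi \<beta> n)"
  then have "Psi \<beta> n w \<noteq> 0" by (simp add: supp_def)
  show "w \<in> wd ` P n"
  proof (rule ccontr)
    assume "w \<notin> wd ` P n"
    then have e: "{\<sigma> \<in> P n. wd \<sigma> = w} = {}" by blast
    have "Psi \<beta> n w = 0" unfolding Psi_def by (simp only: e sum.empty)
    then show False using \<open>Psi \<beta> n w \<noteq> 0\<close> by simp
  qed
qed

lemma Psi_0: "Psi \<beta> 0 = single [(E, 0)] 1"
proof
  fix w
  have "wd [] = [(E, 0)]" by (simp add: wd_def lab_def)
  moreover have "RLmin [] = 0" by (auto simp: RLmin_def is_rlmin_def)
  moreover have "inv_stat [] = 0"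
  proof -
    have "{(i, j). 1 \<le> i \<and> i < j \<and> j \<le> length ([]::nat list) \<and> sg [] i > sg [] j} = {}" by auto
    then show ?thesis unfolding inv_stat_def by (simp only:) simp
  qed
  moreover have "{\<sigma> \<in> P 0. wd \<sigma> = w} = (if w = [(E, 0)] then {[]} else {})"
    using \<open>wd [] = [(E, 0)]\<close> by auto
  ultimately show "Psi \<beta> 0 w = single [(E, 0)] 1 w"
    unfolding Psi_def single_def by simp
qed

lemma mon_ins:
  assumes s: "\<sigma> \<in> P n" and j: "j < Suc n"
  shows "monom (\<beta> ^ RLmin \<sigma>) (inv_stat \<sigma>) * rcf \<beta> (wd \<sigma> ! j) =
    monom (\<beta> ^ RLmin (insm \<sigma> (n - j) (Suc n))) (inv_stat (insm \<sigma> (n - j) (Suc n)))"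
proof -
  have l: "length \<sigma> = n" using P_len[OF s] .
  have m: "\<forall>a\<in>set \<sigma>. a < Suc n" using P_lt[OF s] .
  have i: "n - j \<le> length \<sigma>" using l by simp
  have w: "wd \<sigma> ! j = (lab \<sigma> (n - j), j)" using nth_wd[of j \<sigma>] l j by simp
  have e: "(lab \<sigma> (n - j) = E) = (j = 0)" using lab_E[of "n - j" \<sigma>] l j by auto
  have iv: "inv_stat (insm \<sigma> (n - j) (Suc n)) = inv_stat \<sigma> + j"
    using inv_insm[OF i m] l j by simp
  have rl: "RLmin (insm \<sigma> (n - j) (Suc n)) = RLmin \<sigma> + (if j = 0 then 1 else 0)"
    using RLmin_insm[OF i m] l j by auto
  show ?thesis unfolding iv rl rcf_def w using e by (simp add: mult_monom)
qed

lemma Psi_step: "qderiv (rule_cyc \<beta>) (Psi \<beta> n) = Psi \<beta> (Suc n)"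
proof
  fix w'
  let ?T = "\<lambda>w. (\<Sum>j<length w. if insw w j = w' then rcf \<beta> (w ! j) else 0)"
  let ?mon = "\<lambda>\<sigma>. monom (\<beta> ^ RLmin \<sigma>) (inv_stat \<sigma>)"
  let ?h = "\<lambda>(\<sigma>, j). insm \<sigma> (n - j) (Suc n)"
  let ?G = "\<lambda>t. if wd t = w' then ?mon t else 0"
  have "qderiv (rule_cyc \<beta>) (Psi \<beta> n) w' = (\<Sum>w\<in>wd ` P n. Psi \<beta> n w * ?T w)"
    by (rule qderiv_cyc[OF _ supp_Psi]) simp
  also have "\<dots> = (\<Sum>w\<in>wd ` P n. \<Sum>\<sigma>\<in>{\<sigma> \<in> P n. wd \<sigma> = w}. ?mon \<sigma> * ?T (wd \<sigma>))"
  proof (rule sum.cong[OF refl])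
    fix w assume "w \<in> wd ` P n"
    show "Psi \<beta> n w * ?T w = (\<Sum>\<sigma>\<in>{\<sigma> \<in> P n. wd \<sigma> = w}. ?mon \<sigma> * ?T (wd \<sigma>))"
      unfolding Psi_def sum_distrib_right by (rule sum.cong) auto
  qed
  also have "\<dots> = (\<Sum>\<sigma>\<in>P n. ?mon \<sigma> * ?T (wd \<sigma>))"
    by (rule sum.image_gen[symmetric]) simp
  also have "\<dots> = (\<Sum>\<sigma>\<in>P n. \<Sum>j<Suc n. ?G (?h (\<sigma>, j)))"
  proof (rule sum.cong[OF refl])
    fix \<sigma> assume s: "\<sigma> \<in> P n"
    have l: "length \<sigma> = n" using P_len[OF s] .
    have "?mon \<sigma> * ?T (wd \<sigma>) = (\<Sum>j<Suc n. if insw (wd \<sigma>) j = w' then ?mon \<sigma> * rcf \<beta> (wd \<sigma> ! j) else 0)"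
      unfolding length_wd l sum_distrib_left by (rule sum.cong) simp_all
    also have "\<dots> = (\<Sum>j<Suc n. ?G (?h (\<sigma>, j)))"
    proof (rule sum.cong[OF refl])
      fix j assume j: "j \<in> {..<Suc n}"
      have "wd (insm \<sigma> (n - j) (Suc n)) = insw (wd \<sigma>) j"
        using wd_insm[of j \<sigma> "Suc n"] P_lt[OF s] l j by simp
      then show "(if insw (wd \<sigma>) j = w' then ?mon \<sigma> * rcf \<beta> (wd \<sigma> ! j) else 0) = ?G (?h (\<sigma>, j))"
        using mon_ins[OF s, of j \<beta>] j by simp
    qed
    finally show "?mon \<sigma> * ?T (wd \<sigma>) = (\<Sum>j<Suc n. ?G (?h (\<sigma>, j)))" .
  qed
  also have "\<dots> = (\<Sum>p\<in>P n \<times> {..<Suc n}. ?G (?h p))"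
    unfolding sum.cartesian_product by (rule sum.cong) (auto split: prod.splits)
  also have "\<dots> = (\<Sum>t\<in>P (Suc n). ?G t)"
    by (rule sum.reindex_bij_betw[OF bij_ins])
  also have "\<dots> = Psi \<beta> (Suc n) w'"
    unfolding Psi_def by (simp add: sum.inter_filter)
  finally show "qderiv (rule_cyc \<beta>) (Psi \<beta> n) w' = Psi \<beta> (Suc n) w'" .
qed

lemma Psi_pow: "(qderiv (rule_cyc \<beta>) ^^ n) (single [(E, 0)] 1) = Psi \<beta> n"
  by (induction n) (simp_all add: Psi_0 Psi_step)



lemma cnt_wd: "cnt s (wd \<sigma>) = card {k. k \<le> length \<sigma> \<and> lab \<sigma> k = s}"
proof -
  let ?n = "length \<sigma>"
  have "cnt s (wd \<sigma>) = card {i. i < length (wd \<sigma>) \<and> fst (wd \<sigma> ! i) = s}"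
    unfolding cnt_def by (rule length_filter_conv_card)
  also have "{i. i < length (wd \<sigma>) \<and> fst (wd \<sigma> ! i) = s} = {p. p \<le> ?n \<and> lab \<sigma> (?n - p) = s}"
  proof (rule Collect_cong)
    fix i show "(i < length (wd \<sigma>) \<and> fst (wd \<sigma> ! i) = s) = (i \<le> ?n \<and> lab \<sigma> (?n - i) = s)"
    proof (cases "i \<le> ?n")
      case True then show ?thesis using nth_wd[OF True] by (simp add: length_wd)
    next
      case False then show ?thesis by (simp add: length_wd)
    qed
  qed
  also have "card \<dots> = card ((\<lambda>p. ?n - p) ` {p. p \<le> ?n \<and> lab \<sigma> (?n - p) = s})"
  proof (rule card_image[symmetric], rule inj_onI)
    fix x y assume x: "x \<in> {p. p \<le> ?n \<and> lab \<sigma> (?n - p) = s}" and y: "y \<in> {p. p \<le> ?n \<and> lab \<sigma> (?n - p) = s}"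
      and e: "?n - x = ?n - y"
    have "x \<le> ?n" "y \<le> ?n" using x y by simp_all
    then show "x = y" using e by linarith
  qed
  also have "(\<lambda>p. ?n - p) ` {p. p \<le> ?n \<and> lab \<sigma> (?n - p) = s} = {k. k \<le> ?n \<and> lab \<sigma> k = s}"
  proof
    show "{k. k \<le> ?n \<and> lab \<sigma> k = s} \<subseteq> (\<lambda>p. ?n - p) ` {p. p \<le> ?n \<and> lab \<sigma> (?n - p) = s}"
    proof
      fix k assume "k \<in> {k. k \<le> ?n \<and> lab \<sigma> k = s}"
      then have "k = ?n - (?n - k)" "?n - k \<in> {p. p \<le> ?n \<and> lab \<sigma> (?n - p) = s}" by simp_all
      then show "k \<in> (\<lambda>p. ?n - p) ` {p. p \<le> ?n \<and> lab \<sigma> (?n - p) = s}" by blast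
    qed
  next
    show "(\<lambda>p. ?n - p) ` {p. p \<le> ?n \<and> lab \<sigma> (?n - p) = s} \<subseteq> {k. k \<le> ?n \<and> lab \<sigma> k = s}"
    proof (rule subsetI)
      fix k assume "k \<in> (\<lambda>p. ?n - p) ` {p. p \<le> ?n \<and> lab \<sigma> (?n - p) = s}"
      then obtain p where p: "p \<le> ?n" "lab \<sigma> (?n - p) = s" "k = ?n - p" by blast
      then show "k \<in> {k. k \<le> ?n \<and> lab \<sigma> k = s}" by simp
    qed
  qed
  finally show ?thesis .
qed

context
  fixes \<sigma> :: "nat list" and n :: nat
  assumes s: "\<sigma> \<in> P n"
begin

lemma len: "length \<sigma> = n" using P_len[OF s] .

lemma sg_pos: "1 \<le> k \<Longrightarrow> k \<le> n \<Longrightarrow> sg \<sigma> k > 0"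
  using sg_in_set[of k \<sigma>] P_set[OF s] len by fastforce

lemma sg_adj: "1 \<le> k \<Longrightarrow> k < n \<Longrightarrow> sg \<sigma> k \<noteq> sg \<sigma> (Suc k)"
proof -
  assume k: "1 \<le> k" "k < n"
  have "\<sigma> ! (k - 1) \<noteq> \<sigma> ! k" using P_dist[OF s] len k nth_eq_iff_index_eq[of \<sigma> "k - 1" k] by auto
  then show ?thesis using k len by (simp add: sg_def)
qed

lemma isol_iff:
  assumes i: "i < n" and a: "\<not> sg \<sigma> i > sg \<sigma> (Suc i)"
  shows "is_isol \<sigma> (Suc i) = is_rlmin \<sigma> (Suc i)"
proof
  assume "is_isol \<sigma> (Suc i)" then show "is_rlmin \<sigma> (Suc i)" by (simp add: is_isol_def)
next
  assume r: "is_rlmin \<sigma> (Suc i)"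
  show "is_isol \<sigma> (Suc i)"
  proof (cases "i = 0")
    case True then show ?thesis using r i len by (simp add: is_isol_def)
  next
    case False
    have lt: "sg \<sigma> i < sg \<sigma> (Suc i)" using a sg_adj[of i] False i by (simp add: nat_neq_iff)
    have "is_rlmin \<sigma> i" unfolding is_rlmin_def
    proof (intro conjI allI impI)
      show "1 \<le> i" using False by simp
      show "i \<le> length \<sigma>" using i len by simp
      fix j assume j: "i < j \<and> j \<le> length \<sigma>"
      show "sg \<sigma> i < sg \<sigma> j"
      proof (cases "j = Suc i")
        case True then show ?thesis using lt by simp
      next
        case False
        then have "sg \<sigma> (Suc i) < sg \<sigma> j" using r j by (auto simp: is_rlmin_def)
        then show ?thesis using lt by simp
      qed
    qed
    then show ?thesis using r i len by (simp add: is_isol_def)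
  qed
qed

lemma isol_desc: "is_isol \<sigma> (Suc i) \<Longrightarrow> \<not> sg \<sigma> i > sg \<sigma> (Suc i)"
proof -
  assume h: "is_isol \<sigma> (Suc i)"
  show ?thesis
  proof (cases "i = 0")
    case True then show ?thesis by (simp add: sg_def)
  next
    case False
    then have "is_rlmin \<sigma> i" using h by (simp add: is_isol_def)
    moreover have "Suc i \<le> length \<sigma>" using h by (simp add: is_isol_def)
    ultimately show ?thesis by (auto simp: is_rlmin_def)
  qed
qed

lemma cntE: "card {k. k \<le> n \<and> lab \<sigma> k = E} = 1"
proof -
  have "{k. k \<le> n \<and> lab \<sigma> k = E} = {n}" using len by (auto simp: lab_def)
  then show ?thesis by simp
qed

lemma cntY: "card {k. k \<le> n \<and> lab \<sigma> k = Y} = des \<sigma> - 1"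
proof -
  have e: "{k. k \<le> n \<and> lab \<sigma> k = Y} = {i. i < n \<and> sg \<sigma> i > sg \<sigma> (Suc i)}"
    using len by (auto simp: lab_def)
  have fin: "finite {i. i < n \<and> sg \<sigma> i > sg \<sigma> (Suc i)}" by simp
  show ?thesis
  proof (cases "n = 0")
    case True
    have "{i. i \<le> length \<sigma> \<and> sg \<sigma> i > sg \<sigma> (Suc i)} = {}" using True len by (auto simp: sg_def)
    then have "des \<sigma> = 0" unfolding des_def by (simp only: card.empty)
    then show ?thesis unfolding e using True by simp
  next
    case False
    have "sg \<sigma> n > sg \<sigma> (Suc n)" using sg_pos[of n] False len by (simp add: sg_def)
    then have "{i. i \<le> length \<sigma> \<and> sg \<sigma> i > sg \<sigma> (Suc i)} = insert n {i. i < n \<and> sg \<sigma> i > sg \<sigma> (Suc i)}"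
      using len by auto
    then show ?thesis unfolding e des_def using fin by simp
  qed
qed

lemma cntZ: "card {k. k \<le> n \<and> lab \<sigma> k = Z} = isol \<sigma>"
proof -
  let ?A = "{k. k < n \<and> \<not> sg \<sigma> k > sg \<sigma> (Suc k) \<and> is_rlmin \<sigma> (Suc k)}"
  have e: "{k. k \<le> n \<and> lab \<sigma> k = Z} = ?A" using len by (auto simp: lab_def)
  have e2: "{i. is_isol \<sigma> i} = Suc ` ?A"
  proof
    show "{i. is_isol \<sigma> i} \<subseteq> Suc ` ?A"
    proof
      fix i assume h: "i \<in> {i. is_isol \<sigma> i}"
      then obtain k where k: "i = Suc k" by (cases i) (auto simp: is_isol_def)
      have "k < n" using h k len by (simp add: is_isol_def)
      moreover have "\<not> sg \<sigma> k > sg \<sigma> (Suc k)" using isol_desc h k by simp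
      moreover have "is_rlmin \<sigma> (Suc k)" using h k by (simp add: is_isol_def)
      ultimately show "i \<in> Suc ` ?A" using k by blast
    qed
  next
    show "Suc ` ?A \<subseteq> {i. is_isol \<sigma> i}" using isol_iff by auto
  qed
  show ?thesis unfolding isol_def e e2 by (simp add: card_image)
qed

lemma cntX: "card {k. k \<le> n \<and> lab \<sigma> k = X} = iasc \<sigma>"
proof -
  have "{k. k \<le> n \<and> lab \<sigma> k = X} =
      {i. i < length \<sigma> \<and> \<not> (sg \<sigma> i > sg \<sigma> (Suc i)) \<and> \<not> is_isol \<sigma> (Suc i)}"
    using len isol_iff by (auto simp: lab_def)
  then show ?thesis unfolding iasc_def by simp
qed

lemma expo_wd: "expo (wd \<sigma>) = (iasc \<sigma>, des \<sigma> - 1, isol \<sigma>, 1)"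
  unfolding expo_def cnt_wd len using cntX cntY cntZ cntE by simp

end

lemma phi_Psi: "phi (Psi \<beta> n) = eFinv \<beta> n"
proof
  fix m :: "nat \<times> nat \<times> nat \<times> nat"
  obtain a b c d where m: "m = (a, b, c, d)" by (cases m)
  let ?mon = "\<lambda>\<sigma>. monom (\<beta> ^ RLmin \<sigma>) (inv_stat \<sigma>)"
  let ?S = "{\<sigma> \<in> P n. expo (wd \<sigma>) = m}"
  have "phi (Psi \<beta> n) m = (\<Sum>w\<in>{w \<in> wd ` P n. expo w = m}. Psi \<beta> n w)"
    unfolding phi_def using supp_Psi by (intro sum.mono_neutral_left) (auto simp: supp_def)
  also have "\<dots> = (\<Sum>w\<in>wd ` ?S. \<Sum>\<sigma>\<in>{\<sigma> \<in> ?S. wd \<sigma> = w}. ?mon \<sigma>)"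
  proof -
    have "{w \<in> wd ` P n. expo w = m} = wd ` ?S" by auto
    moreover have "\<And>w. w \<in> wd ` ?S \<Longrightarrow> {\<sigma> \<in> P n. wd \<sigma> = w} = {\<sigma> \<in> ?S. wd \<sigma> = w}" by auto
    ultimately show ?thesis unfolding Psi_def by (auto intro!: sum.cong)
  qed
  also have "\<dots> = (\<Sum>\<sigma>\<in>?S. ?mon \<sigma>)"
    by (rule sum.image_gen[symmetric]) simp
  also have "?S = (if d = 1 then {\<sigma> \<in> P n. iasc \<sigma> = a \<and> des \<sigma> - 1 = b \<and> isol \<sigma> = c} else {})"
    using expo_wd m by auto
  finally show "phi (Psi \<beta> n) m = eFinv \<beta> n m"
    unfolding eFinv_def m by simp
qed

theorem theorem5p8:
  fixes \<beta> :: "'a::{comm_ring_1, ring_char_0}" and n :: nat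
  assumes "n \<ge> 1"
  shows "phi ((qderiv (rule_cyc \<beta>) ^^ n) (single [(E, 0)] 1)) = eFinv \<beta> n"
  unfolding Psi_pow by (rule phi_Psi)

end
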